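(* Let $0<\beta<1$, $h\in\mathbb{R}$, and let $\sigma\in\{-1,1\}^n$ have law $\mathbb{P}(\sigma)=Z^{-1}\exp\{\frac{\beta}{n}\sum_{i<j}\sigma_i\sigma_j+h\sum_i\sigma_i\}$. Let $\sigma'$ be obtained from $\sigma$ by choosing a site $i\in\{1,\dots,n\}$ uniformly at random and resampling $\sigma_i$ from its conditional law under this Gibbs measure given $(\sigma_j)_{j\neq i}$, and let $\sigma''$ be obtained from $\sigma'$ in the same way. Let $W,W',W''$ be $\sum_i\sigma_i,\sum_i\sigma_i',\sum_i\sigma_i''$, let $Q_k=\mathbb{P}[W'=W+k\mid\sigma]$, $q_k=\mathbb{E}Q_k$, $Q_{k,k}=\mathbb{P}[W'=W+k,W''=W'+k\mid\sigma]$, let $m=\frac1n\sum_{i=1}^n\sigma_i$, and let $m_0$ be the unique solution of $m=\tanh(\beta m+h)$. Then there is a constant $C$ depending only on $\beta,h$ such that for $k=\pm2$, \[ \Bigl|Q_k-\frac{1-m_0^2}{4}\Bigr|\le C\Bigl(|m-m_0|+\frac1n\Bigr),\qquad |Q_{k,k}-Q_k^2|=O(n^{-1}), \] and \[ \Bigl|q_k-\frac{1-m_0^2}{4}\Bigr|=O(n^{-1/2}),\qquad \mathrm{Var}(Q_k)=O(n^{-1}), \] as $n\to\infty$.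
   Context: $Z$ is the normalizing constant of the Gibbs measure (Curie–Weiss model). *)

theory Defs
  imports Complex_Main "HOL-Library.FuncSet"
begin

text \<open>Spin configurations on sites 0..n-1 (indices shifted from 1..n), spins are reals in {-1,1}.\<close>
definition conf :: "nat \<Rightarrow> (nat \<Rightarrow> real) set" where
  "conf n = Pi\<^sub>E {..<n} (\<lambda>_. {-1, 1})"

definition ham :: "real \<Rightarrow> real \<Rightarrow> nat \<Rightarrow> (nat \<Rightarrow> real) \<Rightarrow> real" where
  "ham \<beta> h n \<sigma> = \<beta> / real n * (\<Sum>i<n. \<Sum>j<n. if i < j then \<sigma> i * \<sigma> j else 0)
                   + h * (\<Sum>i<n. \<sigma> i)"

definition Zpart :: "real \<Rightarrow> real \<Rightarrow> nat \<Rightarrow> real" where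
  "Zpart \<beta> h n = (\<Sum>\<sigma>\<in>conf n. exp (ham \<beta> h n \<sigma>))"

definition gibbs :: "real \<Rightarrow> real \<Rightarrow> nat \<Rightarrow> (nat \<Rightarrow> real) \<Rightarrow> real" where
  "gibbs \<beta> h n \<sigma> = exp (ham \<beta> h n \<sigma>) / Zpart \<beta> h n"

definition cond_prob :: "real \<Rightarrow> real \<Rightarrow> nat \<Rightarrow> nat \<Rightarrow> real \<Rightarrow> (nat \<Rightarrow> real) \<Rightarrow> real" where
  "cond_prob \<beta> h n i s \<sigma> =
     exp (ham \<beta> h n (\<sigma>(i := s))) /
     (exp (ham \<beta> h n (\<sigma>(i := 1))) + exp (ham \<beta> h n (\<sigma>(i := -1))))"

definition kernel :: "real \<Rightarrow> real \<Rightarrow> nat \<Rightarrow> (nat \<Rightarrow> real) \<Rightarrow> (nat \<Rightarrow> real) \<Rightarrow> real" where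
  "kernel \<beta> h n \<sigma> \<tau> = (1 / real n) *
     (\<Sum>i<n. \<Sum>s\<in>{-1, 1::real}. if \<tau> = \<sigma>(i := s) then cond_prob \<beta> h n i s \<sigma> else 0)"

definition Wsum :: "nat \<Rightarrow> (nat \<Rightarrow> real) \<Rightarrow> real" where
  "Wsum n \<sigma> = (\<Sum>i<n. \<sigma> i)"

definition magn :: "nat \<Rightarrow> (nat \<Rightarrow> real) \<Rightarrow> real" where
  "magn n \<sigma> = Wsum n \<sigma> / real n"

definition Qk :: "real \<Rightarrow> real \<Rightarrow> nat \<Rightarrow> real \<Rightarrow> (nat \<Rightarrow> real) \<Rightarrow> real" where
  "Qk \<beta> h n k \<sigma> = (\<Sum>\<tau>\<in>conf n. if Wsum n \<tau> = Wsum n \<sigma> + k then kernel \<beta> h n \<sigma> \<tau> else 0)"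

definition Qkk :: "real \<Rightarrow> real \<Rightarrow> nat \<Rightarrow> real \<Rightarrow> (nat \<Rightarrow> real) \<Rightarrow> real" where
  "Qkk \<beta> h n k \<sigma> = (\<Sum>\<tau>\<in>conf n. \<Sum>\<rho>\<in>conf n.
      if Wsum n \<tau> = Wsum n \<sigma> + k \<and> Wsum n \<rho> = Wsum n \<tau> + k
      then kernel \<beta> h n \<sigma> \<tau> * kernel \<beta> h n \<tau> \<rho> else 0)"

definition qk :: "real \<Rightarrow> real \<Rightarrow> nat \<Rightarrow> real \<Rightarrow> real" where
  "qk \<beta> h n k = (\<Sum>\<sigma>\<in>conf n. gibbs \<beta> h n \<sigma> * Qk \<beta> h n k \<sigma>)"

definition varQ :: "real \<Rightarrow> real \<Rightarrow> nat \<Rightarrow> real \<Rightarrow> real" where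
  "varQ \<beta> h n k = (\<Sum>\<sigma>\<in>conf n. gibbs \<beta> h n \<sigma> * (Qk \<beta> h n k \<sigma> - qk \<beta> h n k)\<^sup>2)"

definition m0 :: "real \<Rightarrow> real \<Rightarrow> real" where
  "m0 \<beta> h = (THE m. m = tanh (\<beta> * m + h))"

end

theory Submission
  imports Defs
begin
lemma tanh_mono_diff:
  fixes x y :: real assumes "x \<le> y"
  shows "tanh y - tanh x \<le> y - x"
proof -
  have "(\<lambda>t. t - tanh t) x \<le> (\<lambda>t. t - tanh t) y"
  proof (rule DERIV_nonneg_imp_increasing_open[OF assms])
    fix t :: real
    have "cosh t \<noteq> 0" by (metis cosh_real_pos less_irrefl)
    then have "((\<lambda>t. t - tanh t) has_real_derivative 1 - (1 - tanh t ^ 2)) (at t)"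
      by (auto intro!: derivative_eq_intros)
    then show "\<exists>d. ((\<lambda>t. t - tanh t) has_real_derivative d) (at t) \<and> 0 \<le> d" by force
  next
    show "continuous_on {x..y} (\<lambda>t. t - tanh t)"
      by (intro continuous_intros) (metis cosh_real_pos less_irrefl)
  qed
  then show ?thesis by simp
qed

lemma tanh_lip: "\<bar>tanh (x::real) - tanh y\<bar> \<le> \<bar>x - y\<bar>"
proof (cases "x \<le> y")
  case True
  then have "tanh x \<le> tanh y" by simp
  with tanh_mono_diff[OF True] show ?thesis by linarith
next
  case False
  then have "y \<le> x" by simp
  then have "tanh y \<le> tanh x" by simp
  with tanh_mono_diff[OF \<open>y \<le> x\<close>] show ?thesis by linarith
qed

lemma tanh_abs_le1: "\<bar>tanh (x::real)\<bar> \<le> 1"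
  using tanh_real_bounds[of x] by auto

lemma m0_prop:
  fixes \<beta> h :: real assumes "0 < \<beta>" "\<beta> < 1"
  shows "m0 \<beta> h = tanh (\<beta> * m0 \<beta> h + h)"
proof -
  have ex: "\<exists>m. m = tanh (\<beta> * m + h)"
  proof -
    have "\<exists>x. -1 \<le> x \<and> x \<le> 1 \<and> (\<lambda>m. m - tanh (\<beta> * m + h)) x = 0"
    proof (rule IVT)
      show "(\<lambda>m. m - tanh (\<beta> * m + h)) (-1) \<le> 0" using tanh_real_bounds[of "\<beta> * -1 + h"] by simp
      show "0 \<le> (\<lambda>m. m - tanh (\<beta> * m + h)) 1" using tanh_real_bounds[of "\<beta> * 1 + h"] by simp
      show "(-1::real) \<le> 1" by simp
      show "\<forall>x. -1 \<le> x \<and> x \<le> 1 \<longrightarrow> isCont (\<lambda>m. m - tanh (\<beta> * m + h)) x"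
        by (auto intro!: continuous_intros)
    qed
    then show ?thesis by auto
  qed
  have un: "a = b" if "a = tanh (\<beta> * a + h)" "b = tanh (\<beta> * b + h)" for a b
  proof -
    have "\<bar>a - b\<bar> \<le> \<bar>\<beta> * a + h - (\<beta> * b + h)\<bar>" using tanh_lip that by metis
    also have "\<dots> = \<beta> * \<bar>a - b\<bar>" using assms by (simp add: abs_mult flip: right_diff_distrib)
    finally have "(1 - \<beta>) * \<bar>a - b\<bar> \<le> 0" by (simp add: algebra_simps)
    then show ?thesis using assms by (simp add: mult_le_0_iff)
  qed
  show ?thesis unfolding m0_def
    using ex un by (metis (mono_tags, lifting) theI)
qed


lemma pair_sum:
  "(\<Sum>a<(n::nat). \<Sum>b<n. if a < b then x a * x b else 0) = ((\<Sum>a<n. x a)\<^sup>2 - (\<Sum>a<n. (x a)\<^sup>2)) / (2::real)"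
proof (induction n)
  case 0 then show ?case by simp
next
  case (Suc n)
  have "(\<Sum>a<Suc n. \<Sum>b<Suc n. if a < b then x a * x b else 0)
      = (\<Sum>a<n. \<Sum>b<n. if a < b then x a * x b else 0) + (\<Sum>a<n. x a * x n)"
    by (simp add: sum.distrib)
  also have "\<dots> = ((\<Sum>a<n. x a)\<^sup>2 - (\<Sum>a<n. (x a)\<^sup>2)) / 2 + (\<Sum>a<n. x a) * x n"
    by (simp add: Suc sum_distrib_right)
  also have "\<dots> = ((\<Sum>a<Suc n. x a)\<^sup>2 - (\<Sum>a<Suc n. (x a)\<^sup>2)) / 2"
    by (simp add: power2_eq_square field_simps)
  finally show ?case .
qed

lemma conf_val: "\<sigma> \<in> conf n \<Longrightarrow> i < n \<Longrightarrow> \<sigma> i = -1 \<or> \<sigma> i = 1"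
  unfolding conf_def by (auto simp: PiE_def Pi_def)

lemma conf_sq: "\<sigma> \<in> conf n \<Longrightarrow> i < n \<Longrightarrow> (\<sigma> i)\<^sup>2 = 1"
  using conf_val by fastforce

lemma conf_abs: "\<sigma> \<in> conf n \<Longrightarrow> i < n \<Longrightarrow> \<bar>\<sigma> i\<bar> = 1"
  using conf_val by fastforce

lemma conf_finite: "finite (conf n)"
  unfolding conf_def by (intro finite_PiE) auto

lemma conf_upd: "\<sigma> \<in> conf n \<Longrightarrow> i < n \<Longrightarrow> s \<in> {-1, 1} \<Longrightarrow> \<sigma>(i := s) \<in> conf n"
  unfolding conf_def by (auto simp: PiE_def Pi_def extensional_def)

lemma conf_ne: "conf n \<noteq> {}"
  unfolding conf_def by (simp add: PiE_eq_empty_iff)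

lemma W_upd: "i < n \<Longrightarrow> Wsum n (\<sigma>(i := s)) = Wsum n \<sigma> - \<sigma> i + s"
proof -
  assume i: "i < n"
  have "Wsum n (\<sigma>(i := s)) = (\<Sum>j<n. \<sigma> j + (if j = i then s - \<sigma> i else 0))"
    unfolding Wsum_def by (intro sum.cong) auto
  also have "\<dots> = Wsum n \<sigma> + (s - \<sigma> i)" using i by (simp add: sum.distrib Wsum_def)
  finally show ?thesis by simp
qed

lemma W_abs: "\<sigma> \<in> conf n \<Longrightarrow> \<bar>Wsum n \<sigma>\<bar> \<le> real n"
proof -
  assume s: "\<sigma> \<in> conf n"
  have "\<bar>Wsum n \<sigma>\<bar> \<le> (\<Sum>i<n. \<bar>\<sigma> i\<bar>)" unfolding Wsum_def by (rule sum_abs)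
  also have "\<dots> = (\<Sum>i<n. 1)" using conf_abs[OF s] by simp
  finally show ?thesis by simp
qed

lemma magn_abs: "\<sigma> \<in> conf n \<Longrightarrow> \<bar>magn n \<sigma>\<bar> \<le> 1"
proof -
  assume s: "\<sigma> \<in> conf n"
  show ?thesis
  proof (cases "n = 0")
    case True then show ?thesis by (simp add: magn_def)
  next
    case False
    then have "real n > 0" by simp
    then show ?thesis using W_abs[OF s] by (simp add: magn_def abs_divide)
  qed
qed

lemma ham_conf:
  assumes "\<sigma> \<in> conf n"
  shows "ham \<beta> h n \<sigma> = \<beta> / (2 * real n) * ((Wsum n \<sigma>)\<^sup>2 - real n) + h * Wsum n \<sigma>"
proof -
  have sq: "(\<Sum>a<n. (\<sigma> a)\<^sup>2) = real n" using conf_sq[OF assms] by simp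
  have "ham \<beta> h n \<sigma> = \<beta> / real n * (((Wsum n \<sigma>)\<^sup>2 - (\<Sum>a<n. (\<sigma> a)\<^sup>2)) / 2) + h * Wsum n \<sigma>"
    unfolding ham_def Wsum_def by (subst pair_sum) (rule refl)
  also have "\<dots> = \<beta> / (2 * real n) * ((Wsum n \<sigma>)\<^sup>2 - real n) + h * Wsum n \<sigma>"
    unfolding sq by simp
  finally show ?thesis .
qed


definition aa :: "real \<Rightarrow> real \<Rightarrow> nat \<Rightarrow> (nat \<Rightarrow> real) \<Rightarrow> nat \<Rightarrow> real" where
  "aa \<beta> h n \<sigma> i = \<beta> * (Wsum n \<sigma> - \<sigma> i) / real n + h"

definition KK :: "real \<Rightarrow> real \<Rightarrow> nat \<Rightarrow> (nat \<Rightarrow> real) \<Rightarrow> nat \<Rightarrow> real" where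
  "KK \<beta> h n \<sigma> i = \<beta> / (2 * real n) * ((Wsum n \<sigma> - \<sigma> i)\<^sup>2 + 1 - real n) + h * (Wsum n \<sigma> - \<sigma> i)"

lemma ham_upd:
  assumes "\<sigma> \<in> conf n" "i < n" "t \<in> {-1, 1}"
  shows "ham \<beta> h n (\<sigma>(i := t)) = KK \<beta> h n \<sigma> i + t * aa \<beta> h n \<sigma> i"
proof -
  define S where "S = Wsum n \<sigma> - \<sigma> i"
  have t2: "t\<^sup>2 = 1" using assms(3) by auto
  have e1: "ham \<beta> h n (\<sigma>(i := t)) = \<beta> / (2 * real n) * ((S + t)\<^sup>2 - real n) + h * (S + t)"
    using ham_conf[OF conf_upd[OF assms]] W_upd[OF assms(2)] by (simp add: S_def)
  have e2: "(S + t)\<^sup>2 = S\<^sup>2 + 1 + 2 * S * t" using t2 by (simp add: power2_eq_square algebra_simps)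
  have e3: "\<beta> / (2 * real n) * (S\<^sup>2 + 1 + 2 * S * t - real n) + h * (S + t)
      = \<beta> / (2 * real n) * (S\<^sup>2 + 1 - real n) + h * S + t * (\<beta> * S / real n + h)"
    by (cases "n = 0") (simp_all add: field_simps)
  show ?thesis unfolding KK_def aa_def S_def[symmetric] e1 e2 e3 by simp
qed

lemma aa_upd: "i < n \<Longrightarrow> aa \<beta> h n (\<sigma>(i := t)) i = aa \<beta> h n \<sigma> i"
  by (simp add: aa_def W_upd)

lemma KK_upd: "i < n \<Longrightarrow> KK \<beta> h n (\<sigma>(i := t)) i = KK \<beta> h n \<sigma> i"
  by (simp add: KK_def W_upd)

lemma cp_formula:
  assumes "\<sigma> \<in> conf n" "i < n" "s \<in> {-1, 1}"
  shows "cond_prob \<beta> h n i s \<sigma> = (1 + s * tanh (aa \<beta> h n \<sigma> i)) / 2"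
proof -
  define a where "a = aa \<beta> h n \<sigma> i"
  define K where "K = KK \<beta> h n \<sigma> i"
  have "cond_prob \<beta> h n i s \<sigma> = exp (K + s * a) / (exp (K + a) + exp (K - a))"
    unfolding cond_prob_def a_def K_def
    using ham_upd[OF assms(1,2), of s] ham_upd[OF assms(1,2), of 1] ham_upd[OF assms(1,2), of "-1"] assms(3)
    by simp
  also have "\<dots> = (exp K * exp (s * a)) / (exp K * (exp a + exp (- a)))"
    by (simp add: exp_add distrib_left flip: exp_add)
  also have "\<dots> = exp (s * a) / (exp a + exp (- a))"
    by (rule mult_divide_mult_cancel_left) simp
  also have "\<dots> = (1 + s * tanh a) / 2"
  proof -
    have nz: "exp a + exp (- a) \<noteq> 0" by (metis add_pos_pos exp_gt_zero less_irrefl)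
    show ?thesis using assms(3) nz by (auto simp: tanh_altdef field_simps)
  qed
  finally show ?thesis by (simp add: a_def)
qed


definition FF :: "real \<Rightarrow> real \<Rightarrow> nat \<Rightarrow> real \<Rightarrow> real \<Rightarrow> real" where
  "FF \<beta> h n s m = (1 - s * m) / 2 * ((1 + s * tanh (\<beta> * m + h + \<beta> * s / real n)) / 2)"

lemma Qk_formula:
  assumes \<sigma>: "\<sigma> \<in> conf n" and n: "n \<ge> 1" and s: "s \<in> {-1, 1}"
  shows "Qk \<beta> h n (2 * s) \<sigma> = FF \<beta> h n s (magn n \<sigma>)"
proof -
  define P where "P = (1 + s * tanh (\<beta> * magn n \<sigma> + h + \<beta> * s / real n)) / 2"
  have nz: "real n \<noteq> 0" using n by simp
  have "Qk \<beta> h n (2 * s) \<sigma> = (\<Sum>\<tau>\<in>conf n. (1 / real n) * (\<Sum>i<n. \<Sum>s'\<in>{-1, 1::real}.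
           if \<tau> = \<sigma>(i := s') then (if Wsum n \<tau> = Wsum n \<sigma> + 2 * s then cond_prob \<beta> h n i s' \<sigma> else 0) else 0))"
    unfolding Qk_def
  proof (rule sum.cong)
    fix \<tau> show "(if Wsum n \<tau> = Wsum n \<sigma> + 2 * s then kernel \<beta> h n \<sigma> \<tau> else 0) = (1 / real n) * (\<Sum>i<n. \<Sum>s'\<in>{-1, 1::real}.
           if \<tau> = \<sigma>(i := s') then (if Wsum n \<tau> = Wsum n \<sigma> + 2 * s then cond_prob \<beta> h n i s' \<sigma> else 0) else 0)"
    proof (cases "Wsum n \<tau> = Wsum n \<sigma> + 2 * s")
      case True
      then show ?thesis by (simp only: True if_True) (simp add: kernel_def)
    next
      case False
      then show ?thesis by (simp only: False if_False) simp
    qed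
  qed simp
  also have "\<dots> = (1 / real n) * (\<Sum>i<n. \<Sum>s'\<in>{-1, 1::real}. \<Sum>\<tau>\<in>conf n.
           if \<tau> = \<sigma>(i := s') then (if Wsum n \<tau> = Wsum n \<sigma> + 2 * s then cond_prob \<beta> h n i s' \<sigma> else 0) else 0)"
    by (simp add: sum_distrib_left sum.swap[of _ "conf n"])
  also have "\<dots> = (1 / real n) * (\<Sum>i<n. \<Sum>s'\<in>{-1, 1::real}.
           if Wsum n (\<sigma>(i := s')) = Wsum n \<sigma> + 2 * s then cond_prob \<beta> h n i s' \<sigma> else 0)"
  proof (intro arg_cong[where f="\<lambda>x. _ * x"] sum.cong refl)
    fix i s' assume i: "i \<in> {..<n}" and s': "s' \<in> {-1, 1::real}"
    have m: "\<sigma>(i := s') \<in> conf n" using conf_upd[OF \<sigma>] i s' by simp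
    show "(\<Sum>\<tau>\<in>conf n. if \<tau> = \<sigma>(i := s') then (if Wsum n \<tau> = Wsum n \<sigma> + 2 * s then cond_prob \<beta> h n i s' \<sigma> else 0) else 0)
      = (if Wsum n (\<sigma>(i := s')) = Wsum n \<sigma> + 2 * s then cond_prob \<beta> h n i s' \<sigma> else 0)"
      by (subst sum.delta[OF conf_finite]) (simp only: m if_True)
  qed
  also have "\<dots> = (1 / real n) * (\<Sum>i<n. (if \<sigma> i = -s then 1 else 0) * P)"
  proof (intro arg_cong[where f="\<lambda>x. _ * x"] sum.cong refl)
    fix i assume i: "i \<in> {..<n}"
    have cp: "cond_prob \<beta> h n i s \<sigma> = P" if "\<sigma> i = -s"
    proof -
      have "aa \<beta> h n \<sigma> i = \<beta> * magn n \<sigma> + h + \<beta> * s / real n"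
        using that nz unfolding aa_def magn_def by (simp add: field_simps)
      then show ?thesis using cp_formula[OF \<sigma> _ s] i by (simp add: P_def)
    qed
    have v: "\<sigma> i = -1 \<or> \<sigma> i = 1" using conf_val[OF \<sigma>] i by simp
    show "(\<Sum>s'\<in>{-1, 1::real}. if Wsum n (\<sigma>(i := s')) = Wsum n \<sigma> + 2 * s then cond_prob \<beta> h n i s' \<sigma> else 0)
        = (if \<sigma> i = -s then 1 else 0) * P"
      using W_upd[of i n \<sigma>] i v s cp by (auto simp:)
  qed
  also have "\<dots> = (1 / real n) * ((\<Sum>i<n. (1 - s * \<sigma> i) / 2) * P)"
  proof -
    have "(\<Sum>i<n. (if \<sigma> i = -s then 1 else 0)) = (\<Sum>i<n. (1 - s * \<sigma> i) / (2::real))"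
    proof (rule sum.cong)
      fix i assume "i \<in> {..<n}"
      then have "\<sigma> i = -1 \<or> \<sigma> i = 1" using conf_val[OF \<sigma>] by simp
      then show "(if \<sigma> i = -s then 1 else 0) = (1 - s * \<sigma> i) / (2::real)" using s by auto
    qed simp
    then show ?thesis by (metis (no_types) sum_distrib_right)
  qed
  also have "(\<Sum>i<n. (1 - s * \<sigma> i) / 2) = (real n - s * Wsum n \<sigma>) / 2"
    by (simp add: Wsum_def sum_divide_distrib[symmetric] sum_subtractf sum_distrib_left)
  also have "(1 / real n) * ((real n - s * Wsum n \<sigma>) / 2 * P) = FF \<beta> h n s (magn n \<sigma>)"
    unfolding FF_def P_def magn_def using nz by (simp add: field_simps)
  finally show ?thesis .
qed


lemma prod_diff_bound:
  fixes x y x' y' :: real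
  shows "\<bar>x' * y' - x * y\<bar> \<le> \<bar>x' - x\<bar> * \<bar>y'\<bar> + \<bar>x\<bar> * \<bar>y' - y\<bar>"
proof -
  have "x' * y' - x * y = (x' - x) * y' + x * (y' - y)" by (simp add: algebra_simps)
  then show ?thesis by (metis abs_mult abs_triangle_ineq)
qed

lemma half_diff:
  assumes "s \<in> {-1, 1::real}"
  shows "\<bar>(a + s * x) / 2 - (a + s * y) / 2\<bar> = \<bar>x - y\<bar> / 2"
proof -
  have e: "(a + s * x) / 2 - (a + s * y) / 2 = s * (x - y) / 2" by (simp add: field_simps)
  have "\<bar>s\<bar> = 1" using assms by auto
  then show ?thesis unfolding e abs_divide abs_mult by simp
qed

lemma half_diff':
  assumes "s \<in> {-1, 1::real}"
  shows "\<bar>(a - s * x) / 2 - (a - s * y) / 2\<bar> = \<bar>x - y\<bar> / 2"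
  using half_diff[of "-s" a x y] assms by auto

lemma half_tanh_bound: "s \<in> {-1, 1::real} \<Longrightarrow> \<bar>(1 + s * tanh a) / 2\<bar> \<le> 1"
  using tanh_abs_le1[of a] by (auto simp: abs_le_iff)

lemma half_m_bound: "s \<in> {-1, 1::real} \<Longrightarrow> \<bar>m\<bar> \<le> 1 \<Longrightarrow> \<bar>(1 - s * m) / 2\<bar> \<le> 1"
  by (auto simp: abs_le_iff)

lemma FF_abs:
  assumes "s \<in> {-1, 1}" "\<bar>m\<bar> \<le> 1"
  shows "\<bar>FF \<beta> h n s m\<bar> \<le> 1"
proof -
  have "\<bar>FF \<beta> h n s m\<bar> = \<bar>(1 - s * m) / 2\<bar> * \<bar>(1 + s * tanh (\<beta> * m + h + \<beta> * s / real n)) / 2\<bar>"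
    unfolding FF_def abs_mult ..
  also have "\<dots> \<le> 1 * 1"
    by (intro mult_mono half_tanh_bound half_m_bound assms) auto
  finally show ?thesis by simp
qed

lemma FF_m0:
  assumes b: "0 < \<beta>" "\<beta> < 1" and s: "s \<in> {-1, 1}" and m: "\<bar>m\<bar> \<le> 1" and n: "n \<ge> 1"
  shows "\<bar>FF \<beta> h n s m - (1 - (m0 \<beta> h)\<^sup>2) / 4\<bar> \<le> \<bar>m - m0 \<beta> h\<bar> + 1 / real n"
proof -
  define z where "z = m0 \<beta> h"
  have z: "z = tanh (\<beta> * z + h)" using m0_prop[OF b] by (simp add: z_def)
  have zb: "\<bar>z\<bar> \<le> 1" using z tanh_abs_le1 by metis
  have c: "(1 - z\<^sup>2) / 4 = (1 - s * z) / 2 * ((1 + s * tanh (\<beta> * z + h)) / 2)"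
    using s by (subst z[symmetric]) (auto simp: power2_eq_square field_simps)
  define T where "T = tanh (\<beta> * m + h + \<beta> * s / real n)"
  have "\<bar>FF \<beta> h n s m - (1 - z\<^sup>2) / 4\<bar>
     \<le> \<bar>(1 - s * m) / 2 - (1 - s * z) / 2\<bar> * \<bar>(1 + s * T) / 2\<bar>
       + \<bar>(1 - s * z) / 2\<bar> * \<bar>(1 + s * T) / 2 - (1 + s * tanh (\<beta> * z + h)) / 2\<bar>"
    unfolding FF_def c T_def by (rule prod_diff_bound)
  also have "\<dots> \<le> \<bar>m - z\<bar> / 2 * 1 + 1 * (\<beta> * \<bar>m - z\<bar> / 2 + \<beta> / (2 * real n))"
  proof (intro add_mono mult_mono)
    show "\<bar>(1 - s * m) / 2 - (1 - s * z) / 2\<bar> \<le> \<bar>m - z\<bar> / 2"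
      using half_diff'[OF s] by simp
    show "\<bar>(1 + s * T) / 2\<bar> \<le> 1" unfolding T_def by (rule half_tanh_bound[OF s])
    show "\<bar>(1 - s * z) / 2\<bar> \<le> 1" by (rule half_m_bound[OF s zb])
    have "\<bar>(1 + s * T) / 2 - (1 + s * tanh (\<beta> * z + h)) / 2\<bar> = \<bar>T - tanh (\<beta> * z + h)\<bar> / 2"
      by (rule half_diff[OF s])
    also have "\<dots> \<le> \<bar>\<beta> * m + h + \<beta> * s / real n - (\<beta> * z + h)\<bar> / 2"
      unfolding T_def by (intro divide_right_mono tanh_lip) simp
    also have "\<bar>\<beta> * m + h + \<beta> * s / real n - (\<beta> * z + h)\<bar> = \<bar>\<beta> * (m - z) + \<beta> * s / real n\<bar>"
      by (simp add: algebra_simps)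
    also have "\<dots> \<le> \<beta> * \<bar>m - z\<bar> + \<beta> / real n"
      using s b by (auto simp: abs_mult intro: order.trans[OF abs_triangle_ineq])
    finally show "\<bar>(1 + s * T) / 2 - (1 + s * tanh (\<beta> * z + h)) / 2\<bar> \<le> \<beta> * \<bar>m - z\<bar> / 2 + \<beta> / (2 * real n)"
      by (simp add: field_simps)
  qed auto
  also have "\<dots> \<le> \<bar>m - z\<bar> + 1 / real n"
  proof -
    have "\<beta> * \<bar>m - z\<bar> \<le> \<bar>m - z\<bar>" using b by (simp add: mult_left_le_one_le)
    moreover have "\<beta> / (2 * real n) \<le> 1 / real n" using b n by (simp add: field_simps)
    ultimately show ?thesis by simp
  qed
  finally show ?thesis by (simp add: z_def)
qed

lemma FF_shift:
  assumes b: "0 < \<beta>" "\<beta> < 1" and s: "s \<in> {-1, 1}" and m: "\<bar>m\<bar> \<le> 1" and n: "n \<ge> 1"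
  shows "\<bar>FF \<beta> h n s (m + 2 * s / real n) - FF \<beta> h n s m\<bar> \<le> 2 / real n"
proof -
  define T' where "T' = tanh (\<beta> * (m + 2 * s / real n) + h + \<beta> * s / real n)"
  define T where "T = tanh (\<beta> * m + h + \<beta> * s / real n)"
  have nz: "real n > 0" using n by simp
  have "\<bar>FF \<beta> h n s (m + 2 * s / real n) - FF \<beta> h n s m\<bar>
     \<le> \<bar>(1 - s * (m + 2 * s / real n)) / 2 - (1 - s * m) / 2\<bar> * \<bar>(1 + s * T') / 2\<bar>
       + \<bar>(1 - s * m) / 2\<bar> * \<bar>(1 + s * T') / 2 - (1 + s * T) / 2\<bar>"
    unfolding FF_def T_def T'_def by (rule prod_diff_bound)
  also have "\<dots> \<le> 1 / real n * 1 + 1 * (1 / real n)"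
  proof (intro add_mono mult_mono)
    show "\<bar>(1 - s * (m + 2 * s / real n)) / 2 - (1 - s * m) / 2\<bar> \<le> 1 / real n"
    proof -
      have "(1 - s * (m + 2 * s / real n)) / 2 - (1 - s * m) / 2 = - (s * s) / real n"
        using nz by (simp add: field_simps)
      then show ?thesis using s by auto
    qed
    show "\<bar>(1 + s * T') / 2\<bar> \<le> 1" unfolding T'_def by (rule half_tanh_bound[OF s])
    show "\<bar>(1 - s * m) / 2\<bar> \<le> 1" by (rule half_m_bound[OF s m])
    have "\<bar>(1 + s * T') / 2 - (1 + s * T) / 2\<bar> = \<bar>T' - T\<bar> / 2"
      by (rule half_diff[OF s])
    also have "\<dots> \<le> \<bar>\<beta> * (m + 2 * s / real n) + h + \<beta> * s / real n - (\<beta> * m + h + \<beta> * s / real n)\<bar> / 2"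
      unfolding T_def T'_def by (intro divide_right_mono tanh_lip) simp
    also have "\<bar>\<beta> * (m + 2 * s / real n) + h + \<beta> * s / real n - (\<beta> * m + h + \<beta> * s / real n)\<bar> = 2 * \<beta> / real n"
      using s b nz by (auto simp: algebra_simps)
    also have "2 * \<beta> / real n / 2 \<le> 1 / real n" using b nz by (simp add: field_simps)
    finally show "\<bar>(1 + s * T') / 2 - (1 + s * T) / 2\<bar> \<le> 1 / real n" .
  qed auto
  finally show ?thesis by simp
qed


lemma Qkk_formula:
  assumes \<sigma>: "\<sigma> \<in> conf n" and n: "n \<ge> 1" and s: "s \<in> {-1, 1}"
  shows "Qkk \<beta> h n (2 * s) \<sigma> = FF \<beta> h n s (magn n \<sigma> + 2 * s / real n) * Qk \<beta> h n (2 * s) \<sigma>"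
proof -
  have nz: "real n \<noteq> 0" using n by simp
  have "Qkk \<beta> h n (2 * s) \<sigma> = (\<Sum>\<tau>\<in>conf n. if Wsum n \<tau> = Wsum n \<sigma> + 2 * s
          then kernel \<beta> h n \<sigma> \<tau> * FF \<beta> h n s (magn n \<sigma> + 2 * s / real n) else 0)"
    unfolding Qkk_def
  proof (rule sum.cong)
    fix \<tau> assume \<tau>: "\<tau> \<in> conf n"
    show "(\<Sum>\<rho>\<in>conf n. if Wsum n \<tau> = Wsum n \<sigma> + 2 * s \<and> Wsum n \<rho> = Wsum n \<tau> + 2 * s
            then kernel \<beta> h n \<sigma> \<tau> * kernel \<beta> h n \<tau> \<rho> else 0) =
          (if Wsum n \<tau> = Wsum n \<sigma> + 2 * s
          then kernel \<beta> h n \<sigma> \<tau> * FF \<beta> h n s (magn n \<sigma> + 2 * s / real n) else 0)"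
    proof (cases "Wsum n \<tau> = Wsum n \<sigma> + 2 * s")
      case True
      have mt: "magn n \<tau> = magn n \<sigma> + 2 * s / real n"
        unfolding magn_def True using nz by (simp add: field_simps)
      have "(\<Sum>\<rho>\<in>conf n. if Wsum n \<tau> = Wsum n \<sigma> + 2 * s \<and> Wsum n \<rho> = Wsum n \<tau> + 2 * s
            then kernel \<beta> h n \<sigma> \<tau> * kernel \<beta> h n \<tau> \<rho> else 0)
          = kernel \<beta> h n \<sigma> \<tau> * Qk \<beta> h n (2 * s) \<tau>"
        unfolding Qk_def sum_distrib_left by (rule sum.cong) (simp_all only: True simp_thms if_True, simp)
      also have "\<dots> = kernel \<beta> h n \<sigma> \<tau> * FF \<beta> h n s (magn n \<sigma> + 2 * s / real n)"
        using Qk_formula[OF \<tau> n s] mt by simp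
      finally show ?thesis using True by simp
    next
      case False
      then show ?thesis by simp
    qed
  qed simp
  also have "\<dots> = FF \<beta> h n s (magn n \<sigma> + 2 * s / real n) * Qk \<beta> h n (2 * s) \<sigma>"
    unfolding Qk_def sum_distrib_left by (rule sum.cong) auto
  finally show ?thesis .
qed

lemma Qkk_bound:
  assumes b: "0 < \<beta>" "\<beta> < 1" and \<sigma>: "\<sigma> \<in> conf n" and n: "n \<ge> 1" and s: "s \<in> {-1, 1}"
  shows "\<bar>Qkk \<beta> h n (2 * s) \<sigma> - (Qk \<beta> h n (2 * s) \<sigma>)\<^sup>2\<bar> \<le> 2 / real n"
proof -
  have m: "\<bar>magn n \<sigma>\<bar> \<le> 1" by (rule magn_abs[OF \<sigma>])
  have q: "Qk \<beta> h n (2 * s) \<sigma> = FF \<beta> h n s (magn n \<sigma>)" by (rule Qk_formula[OF \<sigma> n s])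
  have "\<bar>Qkk \<beta> h n (2 * s) \<sigma> - (Qk \<beta> h n (2 * s) \<sigma>)\<^sup>2\<bar>
      = \<bar>FF \<beta> h n s (magn n \<sigma>)\<bar> * \<bar>FF \<beta> h n s (magn n \<sigma> + 2 * s / real n) - FF \<beta> h n s (magn n \<sigma>)\<bar>"
    unfolding Qkk_formula[OF \<sigma> n s] q by (simp add: power2_eq_square abs_mult[symmetric] algebra_simps)
  also have "\<dots> \<le> 1 * (2 / real n)"
    by (intro mult_mono FF_abs FF_shift s m b n) auto
  finally show ?thesis by simp
qed

lemma Qk_bound:
  assumes b: "0 < \<beta>" "\<beta> < 1" and \<sigma>: "\<sigma> \<in> conf n" and n: "n \<ge> 1" and s: "s \<in> {-1, 1}"
  shows "\<bar>Qk \<beta> h n (2 * s) \<sigma> - (1 - (m0 \<beta> h)\<^sup>2) / 4\<bar> \<le> \<bar>magn n \<sigma> - m0 \<beta> h\<bar> + 1 / real n"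
  unfolding Qk_formula[OF \<sigma> n s] by (rule FF_m0[OF b s magn_abs[OF \<sigma>] n])

lemma Qk_abs:
  assumes \<sigma>: "\<sigma> \<in> conf n" and n: "n \<ge> 1" and s: "s \<in> {-1, 1}"
  shows "\<bar>Qk \<beta> h n (2 * s) \<sigma>\<bar> \<le> 1"
  unfolding Qk_formula[OF \<sigma> n s] by (rule FF_abs[OF s magn_abs[OF \<sigma>]])


lemma Zpart_pos: "Zpart \<beta> h n > 0"
  unfolding Zpart_def by (intro sum_pos conf_finite conf_ne) auto

lemma gibbs_nonneg: "gibbs \<beta> h n \<sigma> \<ge> 0"
  unfolding gibbs_def using Zpart_pos[of \<beta> h n] by simp

lemma gibbs_sum: "(\<Sum>\<sigma>\<in>conf n. gibbs \<beta> h n \<sigma>) = 1"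
  unfolding gibbs_def sum_divide_distrib[symmetric] using Zpart_pos[of \<beta> h n]
  by (simp add: Zpart_def)

definition fl :: "nat \<Rightarrow> (nat \<Rightarrow> real) \<Rightarrow> (nat \<Rightarrow> real)" where
  "fl i \<sigma> = \<sigma>(i := - \<sigma> i)"

lemma fl_conf: "\<sigma> \<in> conf n \<Longrightarrow> i < n \<Longrightarrow> fl i \<sigma> \<in> conf n"
  unfolding fl_def using conf_upd conf_val by fastforce

lemma fl_fl: "fl i (fl i \<sigma>) = \<sigma>"
  unfolding fl_def by auto

lemma sum_fl:
  assumes "i < n"
  shows "(\<Sum>\<sigma>\<in>conf n. G (fl i \<sigma>)) = (\<Sum>\<sigma>\<in>conf n. G \<sigma>)"
proof (rule sum.reindex_bij_betw)
  show "bij_betw (fl i) (conf n) (conf n)"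
    by (rule bij_betw_byWitness[where f'="fl i"]) (auto simp: fl_fl fl_conf assms)
qed

lemma exp_tanh1: "exp (a::real) * (1 - tanh a) = 2 / (exp a + exp (- a))"
proof -
  have nz: "exp a + exp (- a) \<noteq> 0" by (metis add_pos_pos exp_gt_zero less_irrefl)
  have "exp a * exp (-a) = 1" by (simp add: exp_minus)
  then show ?thesis using nz by (simp add: tanh_altdef field_simps)
qed

lemma exp_tanh2: "exp (- (a::real)) * (1 + tanh a) = 2 / (exp a + exp (- a))"
proof -
  have nz: "exp a + exp (- a) \<noteq> 0" by (metis add_pos_pos exp_gt_zero less_irrefl)
  have "exp a * exp (-a) = 1" by (simp add: exp_minus)
  then show ?thesis using nz by (simp add: tanh_altdef field_simps)
qed

lemma pair_ident:
  fixes a x d t :: real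
  assumes t: "t \<in> {-1, 1}"
  shows "exp (t * a) * (t - tanh a) * (x + t * d) + exp (- t * a) * (- t - tanh a) * (x - t * d)
         = 4 * d / (exp a + exp (- a))"
proof -
  define c where "c = 2 / (exp a + exp (- a))"
  have c1: "exp a * (1 - tanh a) = c" unfolding c_def by (rule exp_tanh1)
  have c2: "exp (- a) * (- 1 - tanh a) = - c" unfolding c_def using exp_tanh2[of a] by (simp add: algebra_simps)
  have "exp (t * a) * (t - tanh a) * (x + t * d) + exp (- t * a) * (- t - tanh a) * (x - t * d) = 2 * c * d"
  proof (cases "t = 1")
    case True
    then have "exp (t * a) * (t - tanh a) * (x + t * d) + exp (- t * a) * (- t - tanh a) * (x - t * d)
      = (exp a * (1 - tanh a)) * (x + d) + (exp (- a) * (- 1 - tanh a)) * (x - d)" by simp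
    also have "\<dots> = c * (x + d) + (- c) * (x - d)" by (simp only: c1 c2)
    finally show ?thesis by (simp add: algebra_simps)
  next
    case False
    then have "t = -1" using t by auto
    then have "exp (t * a) * (t - tanh a) * (x + t * d) + exp (- t * a) * (- t - tanh a) * (x - t * d)
      = (exp (- a) * (- 1 - tanh a)) * (x - d) + (exp a * (1 - tanh a)) * (x + d)" by simp
    also have "\<dots> = (- c) * (x - d) + c * (x + d)" by (simp only: c1 c2)
    finally show ?thesis by (simp add: algebra_simps)
  qed
  then show ?thesis by (simp add: c_def)
qed

lemma cosh_sq_ge: "4 / (exp a + exp (- a)) \<le> exp a + exp (- (a::real))"
proof -
  have p: "exp a + exp (- a) > 0" by (simp add: add_pos_pos)
  have "exp a * exp (-a) = 1" by (simp add: exp_minus)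
  then have "(exp a + exp (- a))\<^sup>2 = (exp a - exp (-a))\<^sup>2 + 4" by (simp add: power2_eq_square algebra_simps)
  then have "4 \<le> (exp a + exp (- a)) * (exp a + exp (- a))" by (simp add: power2_eq_square)
  then show ?thesis using p by (simp add: divide_le_eq)
qed

lemma site_pair:
  fixes \<beta> h z :: real
  assumes \<sigma>: "\<sigma> \<in> conf n" and i: "i < n" and n: "n \<ge> 1"
  defines "G \<equiv> \<lambda>\<tau>. gibbs \<beta> h n \<tau> * ((\<tau> i - tanh (aa \<beta> h n \<tau> i)) * (magn n \<tau> - z))"
  shows "G \<sigma> + G (fl i \<sigma>) \<le> (gibbs \<beta> h n \<sigma> + gibbs \<beta> h n (fl i \<sigma>)) / real n"
proof -
  define t where "t = \<sigma> i"
  define a where "a = aa \<beta> h n \<sigma> i"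
  define K where "K = KK \<beta> h n \<sigma> i"
  define Z where "Z = Zpart \<beta> h n"
  define x where "x = (Wsum n \<sigma> - \<sigma> i) / real n - z"
  have Z: "Z > 0" unfolding Z_def by (rule Zpart_pos)
  have nz: "real n > 0" using n by simp
  have t: "t \<in> {-1, 1}" using conf_val[OF \<sigma> i] by (auto simp: t_def)
  have t': "- t \<in> {-1, 1}" using t by auto
  have s1: "\<sigma> = \<sigma>(i := t)" by (simp add: t_def)
  have s2: "fl i \<sigma> = \<sigma>(i := - t)" by (simp add: fl_def t_def)
  define P where "P = exp K / Z"
  define E1 where "E1 = exp (t * a)"
  define E2 where "E2 = exp (- t * a)"
  have g1: "gibbs \<beta> h n \<sigma> = P * E1"
    unfolding gibbs_def Z_def K_def a_def P_def E1_def
    by (subst s1, subst ham_upd[OF \<sigma> i t]) (simp add: t_def exp_add)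
  have g2: "gibbs \<beta> h n (fl i \<sigma>) = P * E2"
    unfolding gibbs_def Z_def K_def a_def s2 P_def E2_def
    by (subst ham_upd[OF \<sigma> i t']) (simp add: exp_diff exp_minus divide_inverse)
  have a1: "aa \<beta> h n \<sigma> i = a" by (simp add: a_def)
  have a2: "aa \<beta> h n (fl i \<sigma>) i = a" unfolding s2 a_def by (rule aa_upd[OF i])
  have m1: "magn n \<sigma> - z = x + t * (1 / real n)"
    unfolding magn_def x_def t_def using nz by (simp add: field_simps)
  have m2: "magn n (fl i \<sigma>) - z = x - t * (1 / real n)"
    unfolding magn_def x_def s2 W_upd[OF i] using nz by (simp add: field_simps)
  have v1: "\<sigma> i = t" by (simp add: t_def)
  have v2: "fl i \<sigma> i = - t" by (simp add: s2)
  have "G \<sigma> + G (fl i \<sigma>) = P *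
     (E1 * (t - tanh a) * (x + t * (1 / real n)) + E2 * (- t - tanh a) * (x - t * (1 / real n)))"
    unfolding G_def g1 g2 a1 a2 m1 m2 v1 v2
    using nz by (simp add: field_simps)
  also have "\<dots> = P * (4 * (1 / real n) / (exp a + exp (- a)))"
    using pair_ident[OF t, of a x "1 / real n"] unfolding E1_def E2_def by simp
  also have "\<dots> \<le> P * ((exp a + exp (- a)) / real n)"
  proof (rule mult_left_mono)
    have "4 * (1 / real n) / (exp a + exp (- a)) = (4 / (exp a + exp (- a))) / real n" by simp
    also have "\<dots> \<le> (exp a + exp (- a)) / real n" using cosh_sq_ge[of a] nz by (intro divide_right_mono) auto
    finally show "4 * (1 / real n) / (exp a + exp (- a)) \<le> (exp a + exp (- a)) / real n" .
    show "0 \<le> P" using Z by (simp add: P_def)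
  qed
  also have "\<dots> = (gibbs \<beta> h n \<sigma> + gibbs \<beta> h n (fl i \<sigma>)) / real n"
    unfolding g1 g2 E1_def E2_def using t by (auto simp: algebra_simps)
  finally show ?thesis .
qed


lemma site_sum:
  fixes \<beta> h z :: real
  assumes i: "i < n" and n: "n \<ge> 1"
  shows "(\<Sum>\<sigma>\<in>conf n. gibbs \<beta> h n \<sigma> * ((\<sigma> i - tanh (aa \<beta> h n \<sigma> i)) * (magn n \<sigma> - z))) \<le> 1 / real n"
proof -
  define G where "G = (\<lambda>\<tau>. gibbs \<beta> h n \<tau> * ((\<tau> i - tanh (aa \<beta> h n \<tau> i)) * (magn n \<tau> - z)))"
  have "2 * (\<Sum>\<sigma>\<in>conf n. G \<sigma>) = (\<Sum>\<sigma>\<in>conf n. G \<sigma>) + (\<Sum>\<sigma>\<in>conf n. G (fl i \<sigma>))"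
    using sum_fl[OF i, of G] by simp
  also have "\<dots> = (\<Sum>\<sigma>\<in>conf n. G \<sigma> + G (fl i \<sigma>))" by (simp add: sum.distrib)
  also have "\<dots> \<le> (\<Sum>\<sigma>\<in>conf n. (gibbs \<beta> h n \<sigma> + gibbs \<beta> h n (fl i \<sigma>)) / real n)"
    by (intro sum_mono) (unfold G_def, rule site_pair[OF _ i n])
  also have "\<dots> = ((\<Sum>\<sigma>\<in>conf n. gibbs \<beta> h n \<sigma>) + (\<Sum>\<sigma>\<in>conf n. gibbs \<beta> h n (fl i \<sigma>))) / real n"
    by (simp only: sum_divide_distrib[symmetric] sum.distrib)
  also have "\<dots> = 2 / real n" using sum_fl[OF i, of "gibbs \<beta> h n"] gibbs_sum[of \<beta> h n] by simp
  finally show ?thesis by (simp add: G_def)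
qed

lemma pointwise_conc:
  fixes \<beta> h :: real
  assumes b: "0 < \<beta>" "\<beta> < 1" and \<sigma>: "\<sigma> \<in> conf n" and n: "n \<ge> 1"
  defines "z \<equiv> m0 \<beta> h"
  shows "(1 - \<beta>) * (magn n \<sigma> - z)\<^sup>2
    \<le> (1 / real n) * (\<Sum>i<n. (\<sigma> i - tanh (aa \<beta> h n \<sigma> i)) * (magn n \<sigma> - z)) + 2 * \<beta> / real n"
proof -
  define m where "m = magn n \<sigma>"
  have nz: "real n > 0" using n by simp
  have zf: "z = tanh (\<beta> * z + h)" using m0_prop[OF b] by (simp add: z_def)
  have zb: "\<bar>z\<bar> \<le> 1" using zf tanh_abs_le1 by metis
  have mb: "\<bar>m\<bar> \<le> 1" using magn_abs[OF \<sigma>] by (simp add: m_def)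
  define D where "D = m - tanh (\<beta> * m + h)"
  define A where "A = (1 / real n) * (\<Sum>i<n. (\<sigma> i - tanh (aa \<beta> h n \<sigma> i)))"
  define e where "e = (1 / real n) * (\<Sum>i<n. (tanh (aa \<beta> h n \<sigma> i) - tanh (\<beta> * m + h)))"
  have "(1 - \<beta>) * (m - z)\<^sup>2 \<le> D * (m - z)"
  proof -
    define X where "X = (tanh (\<beta> * m + h) - tanh (\<beta> * z + h)) * (m - z)"
    define q where "q = (m - z)\<^sup>2"
    have "\<bar>X\<bar> \<le> \<beta> * \<bar>m - z\<bar> * \<bar>m - z\<bar>"
    proof -
      have "\<bar>tanh (\<beta> * m + h) - tanh (\<beta> * z + h)\<bar> \<le> \<bar>\<beta> * m + h - (\<beta> * z + h)\<bar>" by (rule tanh_lip)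
      also have "\<dots> = \<beta> * \<bar>m - z\<bar>" using b by (simp add: abs_mult flip: right_diff_distrib)
      finally show ?thesis unfolding X_def by (simp add: abs_mult mult_right_mono)
    qed
    moreover have "\<bar>m - z\<bar> * \<bar>m - z\<bar> = q" by (simp add: q_def power2_eq_square abs_mult[symmetric])
    ultimately have X: "X \<le> \<beta> * q" by (simp add: abs_le_iff mult.assoc)
    have Dq: "D * (m - z) = q - X"
    proof -
      have zf1: "tanh (\<beta> * z + h) = z" using zf by simp
      show ?thesis unfolding D_def X_def q_def zf1 by (simp add: power2_eq_square algebra_simps)
    qed
    have "(1 - \<beta>) * q \<le> q - X" using X by (simp add: left_diff_distrib)
    then show ?thesis unfolding Dq q_def .
  qed
  also have "D = A + e"
  proof -
    have "A + e = (1 / real n) * (\<Sum>i<n. (\<sigma> i - tanh (\<beta> * m + h)))"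
    proof -
      have "(\<Sum>i<n. (\<sigma> i - tanh (aa \<beta> h n \<sigma> i))) + (\<Sum>i<n. (tanh (aa \<beta> h n \<sigma> i) - tanh (\<beta> * m + h)))
          = (\<Sum>i<n. (\<sigma> i - tanh (\<beta> * m + h)))" by (simp only: sum.distrib[symmetric]) simp
      then show ?thesis unfolding A_def e_def by (simp only: distrib_left[symmetric])
    qed
    also have "\<dots> = (1 / real n) * (Wsum n \<sigma> - real n * tanh (\<beta> * m + h))"
      by (simp add: sum_subtractf Wsum_def)
    also have "\<dots> = D" unfolding D_def m_def magn_def using nz by (simp add: field_simps)
    finally show ?thesis by simp
  qed
  also have "(A + e) * (m - z) \<le> A * (m - z) + 2 * \<beta> / real n"
  proof -
    have "\<bar>e\<bar> \<le> \<beta> / real n"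
    proof -
      have "\<bar>\<Sum>i<n. (tanh (aa \<beta> h n \<sigma> i) - tanh (\<beta> * m + h))\<bar> \<le> (\<Sum>i<n. \<beta> / real n)"
      proof (rule order.trans[OF sum_abs sum_mono])
        fix i assume "i \<in> {..<n}"
        then have i: "i < n" by simp
        have "\<bar>tanh (aa \<beta> h n \<sigma> i) - tanh (\<beta> * m + h)\<bar> \<le> \<bar>aa \<beta> h n \<sigma> i - (\<beta> * m + h)\<bar>" by (rule tanh_lip)
        also have "aa \<beta> h n \<sigma> i - (\<beta> * m + h) = - \<beta> * \<sigma> i / real n"
          unfolding aa_def m_def magn_def using nz by (simp add: field_simps)
        also have "\<bar>- \<beta> * \<sigma> i / real n\<bar> = \<beta> / real n"
          using conf_abs[OF \<sigma> i] b nz by (simp add: abs_mult)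
        finally show "\<bar>tanh (aa \<beta> h n \<sigma> i) - tanh (\<beta> * m + h)\<bar> \<le> \<beta> / real n" .
      qed
      also have "\<dots> = \<beta>" using nz by simp
      finally show ?thesis unfolding e_def using nz by (simp add: abs_mult divide_right_mono)
    qed
    moreover have "\<bar>m - z\<bar> \<le> 2" using mb zb by simp
    ultimately have "\<bar>e * (m - z)\<bar> \<le> \<beta> / real n * 2"
      unfolding abs_mult by (intro mult_mono) auto
    then show ?thesis by (simp add: algebra_simps abs_le_iff)
  qed
  also have "A * (m - z) = (1 / real n) * (\<Sum>i<n. (\<sigma> i - tanh (aa \<beta> h n \<sigma> i)) * (m - z))"
    unfolding A_def by (simp add: sum_distrib_right)
  finally show ?thesis by (simp add: m_def)
qed

lemma conc:
  assumes b: "0 < \<beta>" "\<beta> < 1" and n: "n \<ge> 1"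
  shows "(\<Sum>\<sigma>\<in>conf n. gibbs \<beta> h n \<sigma> * (magn n \<sigma> - m0 \<beta> h)\<^sup>2) \<le> (1 + 2 * \<beta>) / ((1 - \<beta>) * real n)"
proof -
  define z where "z = m0 \<beta> h"
  have nz: "real n > 0" using n by simp
  have "(1 - \<beta>) * (\<Sum>\<sigma>\<in>conf n. gibbs \<beta> h n \<sigma> * (magn n \<sigma> - z)\<^sup>2)
      = (\<Sum>\<sigma>\<in>conf n. gibbs \<beta> h n \<sigma> * ((1 - \<beta>) * (magn n \<sigma> - z)\<^sup>2))"
    by (simp add: sum_distrib_left algebra_simps)
  also have "\<dots> \<le> (\<Sum>\<sigma>\<in>conf n. gibbs \<beta> h n \<sigma> * ((1 / real n) * (\<Sum>i<n. (\<sigma> i - tanh (aa \<beta> h n \<sigma> i)) * (magn n \<sigma> - z)) + 2 * \<beta> / real n))"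
    by (intro sum_mono mult_left_mono gibbs_nonneg) (use pointwise_conc[OF b _ n] in \<open>simp add: z_def\<close>)
  also have "\<dots> = (1 / real n) * (\<Sum>i<n. \<Sum>\<sigma>\<in>conf n. gibbs \<beta> h n \<sigma> * ((\<sigma> i - tanh (aa \<beta> h n \<sigma> i)) * (magn n \<sigma> - z)))
       + 2 * \<beta> / real n * (\<Sum>\<sigma>\<in>conf n. gibbs \<beta> h n \<sigma>)"
    by (simp add: distrib_left sum.distrib sum_distrib_left sum_distrib_right sum.swap[of _ "conf n"] algebra_simps sum_divide_distrib)
  also have "\<dots> \<le> (1 / real n) * (\<Sum>i<n. 1 / real n) + 2 * \<beta> / real n"
    unfolding gibbs_sum using nz by (intro add_mono mult_left_mono sum_mono site_sum n) auto
  also have "\<dots> = (1 + 2 * \<beta>) / real n" using nz by (simp add: field_simps)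
  finally have "(1 - \<beta>) * (\<Sum>\<sigma>\<in>conf n. gibbs \<beta> h n \<sigma> * (magn n \<sigma> - z)\<^sup>2) \<le> (1 + 2 * \<beta>) / real n" .
  then show ?thesis using b nz by (simp add: z_def field_simps)
qed


lemma amgm_abs:
  fixes r x :: real assumes r: "r > 0"
  shows "\<bar>x\<bar> \<le> (r * x\<^sup>2 + 1 / r) / 2"
proof -
  have "0 \<le> (r * \<bar>x\<bar> - 1)\<^sup>2 / r" using r by simp
  also have "(r * \<bar>x\<bar> - 1)\<^sup>2 / r = r * x\<^sup>2 + 1 / r - 2 * \<bar>x\<bar>"
    using r by (simp add: power2_eq_square field_simps abs_mult_self_eq)
  finally show ?thesis by simp
qed

lemma var_le:
  fixes g Q :: "'a \<Rightarrow> real" and S :: "'a set" and c :: real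
  assumes "finite S" "(\<Sum>x\<in>S. g x) = 1"
  shows "(\<Sum>x\<in>S. g x * (Q x - (\<Sum>y\<in>S. g y * Q y))\<^sup>2) \<le> (\<Sum>x\<in>S. g x * (Q x - c)\<^sup>2)"
proof -
  define q where "q = (\<Sum>y\<in>S. g y * Q y)"
  have "(\<Sum>x\<in>S. g x * (Q x - c)\<^sup>2) = (\<Sum>x\<in>S. g x * (Q x - q)\<^sup>2 + 2 * (q - c) * (g x * (Q x - q)) + (q - c)\<^sup>2 * g x)"
    by (intro sum.cong refl) (simp add: power2_eq_square algebra_simps)
  also have "\<dots> = (\<Sum>x\<in>S. g x * (Q x - q)\<^sup>2) + 2 * (q - c) * (\<Sum>x\<in>S. g x * (Q x - q)) + (q - c)\<^sup>2 * (\<Sum>x\<in>S. g x)"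
    by (simp add: sum.distrib sum_distrib_left)
  also have "(\<Sum>x\<in>S. g x * (Q x - q)) = 0"
    using assms(2) by (simp add: right_diff_distrib sum_subtractf q_def flip: sum_distrib_right)
  finally have "(\<Sum>x\<in>S. g x * (Q x - c)\<^sup>2) = (\<Sum>x\<in>S. g x * (Q x - q)\<^sup>2) + (q - c)\<^sup>2" using assms(2) by simp
  then show ?thesis by (simp add: q_def)
qed

theorem lemma8:
  fixes \<beta> h :: real
  assumes "0 < \<beta>" and "\<beta> < 1"
  shows "\<exists>C. \<forall>n::nat. n \<ge> 1 \<longrightarrow> (\<forall>k\<in>{-2, 2::real}.
           (\<forall>\<sigma>\<in>conf n.
              \<bar>Qk \<beta> h n k \<sigma> - (1 - (m0 \<beta> h)\<^sup>2) / 4\<bar> \<le> C * (\<bar>magn n \<sigma> - m0 \<beta> h\<bar> + 1 / real n)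
            \<and> \<bar>Qkk \<beta> h n k \<sigma> - (Qk \<beta> h n k \<sigma>)\<^sup>2\<bar> \<le> C / real n)
         \<and> \<bar>qk \<beta> h n k - (1 - (m0 \<beta> h)\<^sup>2) / 4\<bar> \<le> C / sqrt (real n)
         \<and> varQ \<beta> h n k \<le> C / real n)"
proof -
  have b: "0 < \<beta>" "\<beta> < 1" by fact+
  define V where "V = (1 + 2 * \<beta>) / (1 - \<beta>)"
  have V0: "V \<ge> 0" using b by (simp add: V_def)
  define C where "C = 2 * V + 4"
  define c where "c = (1 - (m0 \<beta> h)\<^sup>2) / 4"
  define z where "z = m0 \<beta> h"
  show ?thesis
  proof (intro exI[of _ C] allI impI ballI conjI)
    fix n :: nat and k :: real
    assume n: "1 \<le> n" and k: "k \<in> {-2, 2}"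
    define s where "s = k / 2"
    have s: "s \<in> {-1, 1}" using k by (auto simp: s_def)
    have ks: "k = 2 * s" by (simp add: s_def)
    have nz: "real n > 0" using n by simp
    have EV: "(\<Sum>\<sigma>\<in>conf n. gibbs \<beta> h n \<sigma> * (magn n \<sigma> - z)\<^sup>2) \<le> V / real n"
      using conc[OF b n, of h] b by (simp add: V_def z_def field_simps)
    have QB: "\<bar>Qk \<beta> h n k \<sigma> - c\<bar> \<le> \<bar>magn n \<sigma> - z\<bar> + 1 / real n" if "\<sigma> \<in> conf n" for \<sigma>
      unfolding ks c_def z_def by (rule Qk_bound[OF b that n s])
    {
      fix \<sigma> assume \<sigma>: "\<sigma> \<in> conf n"
      have "\<bar>Qk \<beta> h n k \<sigma> - c\<bar> \<le> 1 * (\<bar>magn n \<sigma> - z\<bar> + 1 / real n)" using QB[OF \<sigma>] by simp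
      also have "\<dots> \<le> C * (\<bar>magn n \<sigma> - z\<bar> + 1 / real n)"
        using V0 nz by (intro mult_right_mono) (auto simp: C_def)
      finally show "\<bar>Qk \<beta> h n k \<sigma> - (1 - (m0 \<beta> h)\<^sup>2) / 4\<bar> \<le> C * (\<bar>magn n \<sigma> - m0 \<beta> h\<bar> + 1 / real n)"
        by (simp add: c_def z_def)
      have "\<bar>Qkk \<beta> h n k \<sigma> - (Qk \<beta> h n k \<sigma>)\<^sup>2\<bar> \<le> 2 / real n" unfolding ks by (rule Qkk_bound[OF b \<sigma> n s])
      also have "\<dots> \<le> C / real n" using V0 nz by (intro divide_right_mono) (auto simp: C_def)
      finally show "\<bar>Qkk \<beta> h n k \<sigma> - (Qk \<beta> h n k \<sigma>)\<^sup>2\<bar> \<le> C / real n" .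
    }
    define r where "r = sqrt (real n)"
    have r: "r > 0" using nz by (simp add: r_def)
    have rr: "r * r = real n" using nz by (simp add: r_def)
    have rn: "1 / real n \<le> 1 / r"
    proof -
      have "1 \<le> r" using n by (simp add: r_def)
      then have "r * 1 \<le> r * r" using r by (intro mult_left_mono) auto
      then have "r \<le> r * r" by simp
      then show ?thesis using r rr by (simp add: frac_le)
    qed
    have E1: "(\<Sum>\<sigma>\<in>conf n. gibbs \<beta> h n \<sigma> * \<bar>magn n \<sigma> - z\<bar>) \<le> (V + 1) / (2 * r)"
    proof -
      have "(\<Sum>\<sigma>\<in>conf n. gibbs \<beta> h n \<sigma> * \<bar>magn n \<sigma> - z\<bar>)
          \<le> (\<Sum>\<sigma>\<in>conf n. gibbs \<beta> h n \<sigma> * ((r * (magn n \<sigma> - z)\<^sup>2 + 1 / r) / 2))"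
        by (intro sum_mono mult_left_mono gibbs_nonneg amgm_abs r)
      also have "\<dots> = (r * (\<Sum>\<sigma>\<in>conf n. gibbs \<beta> h n \<sigma> * (magn n \<sigma> - z)\<^sup>2) + 1 / r * (\<Sum>\<sigma>\<in>conf n. gibbs \<beta> h n \<sigma>)) / 2"
      proof -
        have "(\<Sum>\<sigma>\<in>conf n. gibbs \<beta> h n \<sigma> * ((r * (magn n \<sigma> - z)\<^sup>2 + 1 / r) / 2))
          = (\<Sum>\<sigma>\<in>conf n. (r * (gibbs \<beta> h n \<sigma> * (magn n \<sigma> - z)\<^sup>2) + 1 / r * gibbs \<beta> h n \<sigma>) / 2)"
          by (rule sum.cong[OF refl]) (simp add: field_simps)
        also have "\<dots> = (r * (\<Sum>\<sigma>\<in>conf n. gibbs \<beta> h n \<sigma> * (magn n \<sigma> - z)\<^sup>2) + 1 / r * (\<Sum>\<sigma>\<in>conf n. gibbs \<beta> h n \<sigma>)) / 2"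
          by (simp only: sum_divide_distrib[symmetric] sum.distrib sum_distrib_left[symmetric])
        finally show ?thesis .
      qed
      also have "\<dots> \<le> (r * (V / real n) + 1 / r) / 2"
        unfolding gibbs_sum using EV r by (intro divide_right_mono add_mono mult_left_mono) auto
      also have "r * (V / real n) = V / r" using rr r nz by (simp add: field_simps)
      also have "(V / r + 1 / r) / 2 = (V + 1) / (2 * r)" using r by (simp add: field_simps)
      finally show ?thesis .
    qed
    have "\<bar>qk \<beta> h n k - c\<bar> = \<bar>\<Sum>\<sigma>\<in>conf n. gibbs \<beta> h n \<sigma> * (Qk \<beta> h n k \<sigma> - c)\<bar>"
      unfolding qk_def by (simp add: right_diff_distrib sum_subtractf gibbs_sum flip: sum_distrib_right)
    also have "\<dots> \<le> (\<Sum>\<sigma>\<in>conf n. \<bar>gibbs \<beta> h n \<sigma> * (Qk \<beta> h n k \<sigma> - c)\<bar>)" by (rule sum_abs)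
    also have "\<dots> \<le> (\<Sum>\<sigma>\<in>conf n. gibbs \<beta> h n \<sigma> * (\<bar>magn n \<sigma> - z\<bar> + 1 / real n))"
      by (intro sum_mono) (simp add: abs_mult gibbs_nonneg QB mult_left_mono)
    also have "\<dots> = (\<Sum>\<sigma>\<in>conf n. gibbs \<beta> h n \<sigma> * \<bar>magn n \<sigma> - z\<bar>) + 1 / real n"
      by (simp add: distrib_left sum.distrib gibbs_sum flip: sum_distrib_right sum_divide_distrib)
    also have "\<dots> \<le> (V + 1) / (2 * r) + 1 / r" using E1 rn by simp
    also have "\<dots> \<le> C / r" using r V0 by (simp add: C_def field_simps)
    finally show "\<bar>qk \<beta> h n k - (1 - (m0 \<beta> h)\<^sup>2) / 4\<bar> \<le> C / sqrt (real n)" by (simp add: c_def r_def)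
    have "varQ \<beta> h n k \<le> (\<Sum>\<sigma>\<in>conf n. gibbs \<beta> h n \<sigma> * (Qk \<beta> h n k \<sigma> - c)\<^sup>2)"
      unfolding varQ_def qk_def by (rule var_le[OF conf_finite gibbs_sum])
    also have "\<dots> \<le> (\<Sum>\<sigma>\<in>conf n. gibbs \<beta> h n \<sigma> * (2 * (magn n \<sigma> - z)\<^sup>2 + 2 / real n))"
    proof (intro sum_mono mult_left_mono gibbs_nonneg)
      fix \<sigma> assume \<sigma>: "\<sigma> \<in> conf n"
      define x where "x = \<bar>magn n \<sigma> - z\<bar>"
      have "(Qk \<beta> h n k \<sigma> - c)\<^sup>2 = \<bar>Qk \<beta> h n k \<sigma> - c\<bar>\<^sup>2" by simp
      also have "\<dots> \<le> (x + 1 / real n)\<^sup>2"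
        using QB[OF \<sigma>] by (intro power_mono) (auto simp: x_def)
      also have "\<dots> \<le> 2 * x\<^sup>2 + 2 * (1 / real n)\<^sup>2"
        using sum_squares_ge_zero[of "x - 1 / real n" 0] by (simp add: power2_eq_square algebra_simps)
      also have "(1 / real n)\<^sup>2 \<le> 1 / real n" using n by (simp add: power2_eq_square divide_le_eq)
      finally show "(Qk \<beta> h n k \<sigma> - c)\<^sup>2 \<le> 2 * (magn n \<sigma> - z)\<^sup>2 + 2 / real n"
        by (simp add: x_def)
    qed
    also have "\<dots> = 2 * (\<Sum>\<sigma>\<in>conf n. gibbs \<beta> h n \<sigma> * (magn n \<sigma> - z)\<^sup>2) + 2 / real n"
    proof -
      have "(\<Sum>\<sigma>\<in>conf n. gibbs \<beta> h n \<sigma> * (2 * (magn n \<sigma> - z)\<^sup>2 + 2 / real n))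
         = (\<Sum>\<sigma>\<in>conf n. 2 * (gibbs \<beta> h n \<sigma> * (magn n \<sigma> - z)\<^sup>2) + 2 / real n * gibbs \<beta> h n \<sigma>)"
        by (rule sum.cong[OF refl]) (simp add: algebra_simps)
      also have "\<dots> = 2 * (\<Sum>\<sigma>\<in>conf n. gibbs \<beta> h n \<sigma> * (magn n \<sigma> - z)\<^sup>2) + 2 / real n * (\<Sum>\<sigma>\<in>conf n. gibbs \<beta> h n \<sigma>)"
        by (simp only: sum.distrib sum_distrib_left[symmetric])
      finally show ?thesis by (simp add: gibbs_sum)
    qed
    also have "\<dots> \<le> 2 * (V / real n) + 2 / real n" using EV by simp
    also have "\<dots> \<le> C / real n" using nz by (simp add: C_def field_simps)
    finally show "varQ \<beta> h n k \<le> C / real n" .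
  qed
qed

end
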